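(* Let $\alpha_x,\alpha_y,\alpha_z>1$ and consider the Chamon model with these dimensions. For $i=0,1,2,3$ let $C_i=\{s_i+2\lambda_x e_x^{+}+2\lambda_y e_y^{+}+2\lambda_z e_z^{+}:(\lambda_x,\lambda_y,\lambda_z)\in\mathbb Z_{\alpha_x}\times\mathbb Z_{\alpha_y}\times\mathbb Z_{\alpha_z}\}\subseteq\mathcal A\setminus\mathcal D$, where $s_0=(0,1,0)$, $s_1=(1,0,0)$, $s_2=(0,0,1)$, $s_3=(1,1,1)$. Then for every Pauli operator $E$ on the data qubits and every $i\in\{0,1,2,3\}$, the number of $s\in C_i$ such that $E$ anticommutes with $S_s$ is even.
   Context: Chamon model: let $\mathcal A=\mathbb Z_{2\alpha_x}\times\mathbb Z_{2\alpha_y}\times\mathbb Z_{2\alpha_z}$ and $\mathcal D=\{(x,y,z)\in\mathcal A: x+y+z \text{ even}\}$, one qubit per point of $\mathcal D$. With $e_x^{\pm}=(\pm1,0,0)$, $e_y^{\pm}=(0,\pm1,0)$, $e_z^{\pm}=(0,0,\pm1)$, for $s\in\mathcal A\setminus\mathcal D$ the stabilizer generator is $S_s=X_{s+e_x^+}X_{s+e_x^-}Y_{s+e_y^+}Y_{s+e_y^-}Z_{s+e_z^+}Z_{s+e_z^-}$ (single-qubit Paulis, $Y=ZX$). A stabilizer's measurement outcome is changed by an error $E$ exactly when $E$ anticommutes with it. *)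

theory Defs
  imports Main
begin

text \<open>Single-qubit Pauli operators (up to phase; Y = ZX).\<close>
datatype pauli = PI | PX | PY | PZ

definition pauli_anticomm :: "pauli \<Rightarrow> pauli \<Rightarrow> bool" where
  "pauli_anticomm P Q \<longleftrightarrow> P \<noteq> PI \<and> Q \<noteq> PI \<and> P \<noteq> Q"

type_synonym pt = "int \<times> int \<times> int"

text \<open>The lattice A = Z_{2ax} x Z_{2ay} x Z_{2az}, represented by canonical residues.\<close>
definition latA :: "nat \<Rightarrow> nat \<Rightarrow> nat \<Rightarrow> pt set" where
  "latA ax ay az = {(x,y,z). 0 \<le> x \<and> x < 2 * int ax \<and> 0 \<le> y \<and> y < 2 * int ay
                        \<and> 0 \<le> z \<and> z < 2 * int az}"

definition latD :: "nat \<Rightarrow> nat \<Rightarrow> nat \<Rightarrow> pt set" where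
  "latD ax ay az = {(x,y,z) \<in> latA ax ay az. even (x + y + z)}"

definition padd :: "nat \<Rightarrow> nat \<Rightarrow> nat \<Rightarrow> pt \<Rightarrow> pt \<Rightarrow> pt" where
  "padd ax ay az p q = ((fst p + fst q) mod (2 * int ax),
                        (fst (snd p) + fst (snd q)) mod (2 * int ay),
                        (snd (snd p) + snd (snd q)) mod (2 * int az))"

text \<open>Stabilizer S_s as a Pauli operator on the data qubits (value at each qubit).\<close>
definition stab :: "nat \<Rightarrow> nat \<Rightarrow> nat \<Rightarrow> pt \<Rightarrow> pt \<Rightarrow> pauli" where
  "stab ax ay az s q =
     (if q = padd ax ay az s (1,0,0) \<or> q = padd ax ay az s (-1,0,0) then PX
      else if q = padd ax ay az s (0,1,0) \<or> q = padd ax ay az s (0,-1,0) then PY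
      else if q = padd ax ay az s (0,0,1) \<or> q = padd ax ay az s (0,0,-1) then PZ
      else PI)"

text \<open>Two Pauli operators on the data qubits (tensor products, up to phase) anticommute
  iff they anticommute on an odd number of qubits.\<close>
definition anticommutes :: "pt set \<Rightarrow> (pt \<Rightarrow> pauli) \<Rightarrow> (pt \<Rightarrow> pauli) \<Rightarrow> bool" where
  "anticommutes Q E P \<longleftrightarrow> odd (card {q \<in> Q. pauli_anticomm (E q) (P q)})"

definition Cset :: "nat \<Rightarrow> nat \<Rightarrow> nat \<Rightarrow> pt \<Rightarrow> pt set" where
  "Cset ax ay az s0 = {padd ax ay az s0 (2 * int lx, 2 * int ly, 2 * int lz)
                        | lx ly lz. lx < ax \<and> ly < ay \<and> lz < az}"

end

theory Submission imports Defs begin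

lemma even_inv:
  assumes "finite A" "\<forall>x\<in>A. f x \<in> A \<and> f (f x) = x \<and> f x \<noteq> x"
  shows "even (card A)"
  using assms
proof (induction "card A" arbitrary: A rule: less_induct)
  case less
  show ?case
  proof (cases "A = {}")
    case True then show ?thesis by simp
  next
    case False
    then obtain x where x: "x \<in> A" by blast
    let ?B = "A - {x, f x}"
    have fx: "f x \<in> A" "f x \<noteq> x" using less.prems x by auto
    have cB: "card ?B = card A - 2" using fx x less.prems(1) by (simp add: card_Diff_subset)
    have cA: "card A \<ge> 2"
    proof -
      have "{x, f x} \<subseteq> A" using x fx by auto
      hence "card {x, f x} \<le> card A" using less.prems(1) card_mono by blast
      thus ?thesis using fx by simp
    qed
    have "even (card ?B)"
    proof (rule less.hyps)
      show "card ?B < card A" using cB cA by simp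
      show "finite ?B" using less.prems by simp
      show "\<forall>y\<in>?B. f y \<in> ?B \<and> f (f y) = y \<and> f y \<noteq> y"
      proof
        fix y assume y: "y \<in> ?B"
        have h: "f y \<in> A" "f (f y) = y" "f y \<noteq> y" using less.prems(2) y by auto
        have "f y \<noteq> x" using h y by auto
        moreover have "f y \<noteq> f x"
        proof
          assume "f y = f x" hence "f (f y) = f (f x)" by simp
          thus False using h y less.prems(2) x by auto
        qed
        ultimately show "f y \<in> ?B \<and> f (f y) = y \<and> f y \<noteq> y" using h by auto
      qed
    qed
    thus ?thesis using cB cA by auto
  qed
qed

lemma even_sum_card:
  assumes "finite A"
  shows "even (\<Sum>s\<in>A. (g s :: nat)) \<longleftrightarrow> even (card {s\<in>A. odd (g s)})"
  using assms
proof (induction A rule: finite_induct)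
  case empty then show ?case by simp
next
  case (insert a A)
  have fin: "finite {s\<in>A. odd (g s)}" using insert by simp
  show ?case
  proof (cases "odd (g a)")
    case True
    hence "{s\<in>insert a A. odd (g s)} = insert a {s\<in>A. odd (g s)}" by auto
    moreover have "a \<notin> {s\<in>A. odd (g s)}" using insert by auto
    ultimately show ?thesis using insert True fin by auto
  next
    case False
    hence "{s\<in>insert a A. odd (g s)} = {s\<in>A. odd (g s)}" by auto
    then show ?thesis using insert False by auto
  qed
qed

definition difp :: "nat \<Rightarrow> nat \<Rightarrow> nat \<Rightarrow> pt \<Rightarrow> pt \<Rightarrow> pt" where
  "difp ax ay az q s = ((fst q - fst s) mod (2 * int ax),
     (fst (snd q) - fst (snd s)) mod (2 * int ay), (snd (snd q) - snd (snd s)) mod (2 * int az))"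
definition vm :: "nat \<Rightarrow> nat \<Rightarrow> nat \<Rightarrow> pt \<Rightarrow> pt" where
  "vm ax ay az v = (fst v mod (2 * int ax), fst (snd v) mod (2 * int ay), snd (snd v) mod (2 * int az))"
definition negp :: "nat \<Rightarrow> nat \<Rightarrow> nat \<Rightarrow> pt \<Rightarrow> pt" where
  "negp ax ay az v = ((- fst v) mod (2 * int ax), (- fst (snd v)) mod (2 * int ay), (- snd (snd v)) mod (2 * int az))"
definition rf :: "nat \<Rightarrow> nat \<Rightarrow> nat \<Rightarrow> pt \<Rightarrow> pt \<Rightarrow> pt" where
  "rf ax ay az q s = ((2 * fst q - fst s) mod (2 * int ax),
     (2 * fst (snd q) - fst (snd s)) mod (2 * int ay), (2 * snd (snd q) - snd (snd s)) mod (2 * int az))"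
definition G :: "nat \<Rightarrow> nat \<Rightarrow> nat \<Rightarrow> pt \<Rightarrow> pauli" where
  "G ax ay az d = (let a1 = vm ax ay az (1,0,0); a2 = vm ax ay az (0,1,0); a3 = vm ax ay az (0,0,1) in
     if d = a1 \<or> d = negp ax ay az a1 then PX
     else if d = a2 \<or> d = negp ax ay az a2 then PY
     else if d = a3 \<or> d = negp ax ay az a3 then PZ else PI)"

lemma modeq1: "0 \<le> q \<Longrightarrow> q < m \<Longrightarrow> (q = (s + v) mod m) \<longleftrightarrow> ((q::int) - s) mod m = v mod m"
proof -
  assume "0 \<le> q" "q < m"
  hence "q = q mod m" by simp
  hence "(q = (s + v) mod m) \<longleftrightarrow> q mod m = (s + v) mod m" by auto
  also have "\<dots> \<longleftrightarrow> (q - s) mod m = v mod m" by (simp add: mod_eq_dvd_iff algebra_simps)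
  finally show ?thesis .
qed

lemma padd_eq:
  assumes "q \<in> latA ax ay az"
  shows "(q = padd ax ay az s v) \<longleftrightarrow> difp ax ay az q s = vm ax ay az v"
proof -
  obtain qx qy qz where q: "q = (qx,qy,qz)" by (cases q) auto
  obtain sx sy sz where s: "s = (sx,sy,sz)" by (cases s) auto
  obtain vx vy vz where v: "v = (vx,vy,vz)" by (cases v) auto
  have r: "0 \<le> qx" "qx < 2 * int ax" "0 \<le> qy" "qy < 2 * int ay" "0 \<le> qz" "qz < 2 * int az"
    using assms q by (auto simp: latA_def)
  show ?thesis unfolding q s v padd_def difp_def vm_def
    using modeq1[OF r(1,2)] modeq1[OF r(3,4)] modeq1[OF r(5,6)] by simp
qed

lemma vm_neg: "vm ax ay az (-1,0,0) = negp ax ay az (vm ax ay az (1,0,0))"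
  "vm ax ay az (0,-1,0) = negp ax ay az (vm ax ay az (0,1,0))"
  "vm ax ay az (0,0,-1) = negp ax ay az (vm ax ay az (0,0,1))"
  by (simp_all add: vm_def negp_def mod_minus_eq)

lemma stab_G:
  assumes "q \<in> latA ax ay az"
  shows "stab ax ay az s q = G ax ay az (difp ax ay az q s)"
  unfolding stab_def G_def Let_def padd_eq[OF assms] vm_neg ..

lemma negp_in: "ax > 0 \<Longrightarrow> ay > 0 \<Longrightarrow> az > 0 \<Longrightarrow> negp ax ay az d \<in> latA ax ay az"
  by (simp add: negp_def latA_def)
lemma difp_in: "ax > 0 \<Longrightarrow> ay > 0 \<Longrightarrow> az > 0 \<Longrightarrow> difp ax ay az q s \<in> latA ax ay az"
  by (simp add: difp_def latA_def)
lemma vm_in: "ax > 0 \<Longrightarrow> ay > 0 \<Longrightarrow> az > 0 \<Longrightarrow> vm ax ay az q \<in> latA ax ay az"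
  by (simp add: vm_def latA_def)
lemma rf_in: "ax > 0 \<Longrightarrow> ay > 0 \<Longrightarrow> az > 0 \<Longrightarrow> rf ax ay az q s \<in> latA ax ay az"
  by (simp add: rf_def latA_def)

lemma modneg2: "0 \<le> (d::int) \<Longrightarrow> d < m \<Longrightarrow> (- ((- d) mod m)) mod m = d"
  by (simp add: mod_minus_eq)

lemma negp_negp: "d \<in> latA ax ay az \<Longrightarrow> negp ax ay az (negp ax ay az d) = d"
  by (cases d) (auto simp: negp_def latA_def modneg2)

lemma negp_eq: "ax > 0 \<Longrightarrow> ay > 0 \<Longrightarrow> az > 0 \<Longrightarrow> d \<in> latA ax ay az \<Longrightarrow> a \<in> latA ax ay az \<Longrightarrow>
   (negp ax ay az d = a) \<longleftrightarrow> (d = negp ax ay az a)"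
  using negp_negp by metis

lemma G_neg:
  assumes "ax > 0" "ay > 0" "az > 0" "d \<in> latA ax ay az"
  shows "G ax ay az (negp ax ay az d) = G ax ay az d"
proof -
  have e: "\<And>a. a \<in> latA ax ay az \<Longrightarrow> (negp ax ay az d = a \<or> negp ax ay az d = negp ax ay az a) \<longleftrightarrow> (d = a \<or> d = negp ax ay az a)"
    using negp_eq[OF assms(1-3)] negp_in[OF assms(1-3)] negp_negp assms(4) by metis
  show ?thesis unfolding G_def Let_def using e vm_in[OF assms(1-3)] by simp
qed

lemma modrf: "((q::int) - (2*q - s) mod m) mod m = (- ((q - s) mod m)) mod m"
proof -
  have "((q::int) - (2*q - s) mod m) mod m = (q - (2*q - s)) mod m" by (simp add: mod_diff_right_eq)
  moreover have "(- ((q - s) mod m)) mod m = (- (q - s)) mod m" by (simp add: mod_minus_eq)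
  ultimately show ?thesis by (simp add: algebra_simps)
qed

lemma difp_rf: "difp ax ay az q (rf ax ay az q s) = negp ax ay az (difp ax ay az q s)"
  by (simp add: difp_def rf_def negp_def modrf)

lemma modrf2: "0 \<le> (s::int) \<Longrightarrow> s < m \<Longrightarrow> (2*q - (2*q - s) mod m) mod m = s"
proof -
  assume "0 \<le> s" "s < m"
  moreover have "(2*q - (2*q - s) mod m) mod m = (2*q - (2*q - s)) mod m" by (simp add: mod_diff_right_eq)
  ultimately show ?thesis by simp
qed

lemma rf_rf: "s \<in> latA ax ay az \<Longrightarrow> rf ax ay az q (rf ax ay az q s) = s"
  by (cases s) (auto simp: rf_def latA_def modrf2)


lemma Cset_char:
  assumes "ax > 0" "ay > 0" "az > 0" "0 \<le> a" "a \<le> 1" "0 \<le> b" "b \<le> 1" "0 \<le> c" "c \<le> 1"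
  shows "s \<in> Cset ax ay az (a,b,c) \<longleftrightarrow>
     s \<in> latA ax ay az \<and> fst s mod 2 = a \<and> fst (snd s) mod 2 = b \<and> snd (snd s) mod 2 = c"
proof
  assume "s \<in> Cset ax ay az (a,b,c)"
  then obtain lx ly lz where l: "lx < ax" "ly < ay" "lz < az"
    and s: "s = padd ax ay az (a,b,c) (2 * int lx, 2 * int ly, 2 * int lz)"
    unfolding Cset_def by blast
  have "(a + 2 * int lx) mod (2 * int ax) = a + 2 * int lx" using l assms by simp
  moreover have "(b + 2 * int ly) mod (2 * int ay) = b + 2 * int ly" using l assms by simp
  moreover have "(c + 2 * int lz) mod (2 * int az) = c + 2 * int lz" using l assms by simp
  ultimately have s2: "s = (a + 2 * int lx, b + 2 * int ly, c + 2 * int lz)" using s by (simp add: padd_def)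
  show "s \<in> latA ax ay az \<and> fst s mod 2 = a \<and> fst (snd s) mod 2 = b \<and> snd (snd s) mod 2 = c"
    unfolding s2 latA_def using l assms by auto
next
  assume h: "s \<in> latA ax ay az \<and> fst s mod 2 = a \<and> fst (snd s) mod 2 = b \<and> snd (snd s) mod 2 = c"
  obtain x y z where sx: "s = (x,y,z)" by (cases s) auto
  have r: "0 \<le> x" "x < 2 * int ax" "0 \<le> y" "y < 2 * int ay" "0 \<le> z" "z < 2 * int az"
    "x mod 2 = a" "y mod 2 = b" "z mod 2 = c" using h sx by (auto simp: latA_def)
  define lx where "lx = nat (x div 2)"
  define ly where "ly = nat (y div 2)"
  define lz where "lz = nat (z div 2)"
  have ex: "x = a + 2 * int lx"
  proof -
    have "x = a + 2 * (x div 2)" using r by presburger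
    moreover have "x div 2 \<ge> 0" using r by simp
    ultimately show ?thesis unfolding lx_def by simp
  qed
  have ey: "y = b + 2 * int ly"
  proof -
    have "y = b + 2 * (y div 2)" using r by presburger
    moreover have "y div 2 \<ge> 0" using r by simp
    ultimately show ?thesis unfolding ly_def by simp
  qed
  have ez: "z = c + 2 * int lz"
  proof -
    have "z = c + 2 * (z div 2)" using r by presburger
    moreover have "z div 2 \<ge> 0" using r by simp
    ultimately show ?thesis unfolding lz_def by simp
  qed
  have l: "lx < ax" "ly < ay" "lz < az" using ex ey ez r assms by linarith+
  have "s = padd ax ay az (a,b,c) (2 * int lx, 2 * int ly, 2 * int lz)"
    unfolding padd_def sx using r ex ey ez by simp
  thus "s \<in> Cset ax ay az (a,b,c)" unfolding Cset_def using l by blast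
qed

lemma par: "((2 * (q::int) - s) mod (2 * int n)) mod 2 = s mod 2"
proof -
  have "((2 * q - s) mod (2 * int n)) mod 2 = (2 * q - s) mod 2" by (simp add: mod_mod_cancel)
  also have "\<dots> = s mod 2" by presburger
  finally show ?thesis .
qed

lemma rf_C:
  assumes "ax > 0" "ay > 0" "az > 0" "0 \<le> a" "a \<le> 1" "0 \<le> b" "b \<le> 1" "0 \<le> c" "c \<le> 1"
    "s \<in> Cset ax ay az (a,b,c)"
  shows "rf ax ay az q s \<in> Cset ax ay az (a,b,c)"
  using assms rf_in[OF assms(1-3)] unfolding Cset_char[OF assms(1-9)]
  by (simp add: rf_def par)

lemma no_fix:
  assumes "ax > 1" "ay > 1" "az > 1" "q \<in> latA ax ay az" "stab ax ay az s q \<noteq> PI"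
  shows "rf ax ay az q s \<noteq> s"
proof
  assume fx: "rf ax ay az q s = s"
  have p: "ax > 0" "ay > 0" "az > 0" using assms by auto
  define d where "d = difp ax ay az q s"
  have dd: "negp ax ay az d = d" using difp_rf[of ax ay az q s] fx d_def by simp
  have din: "d \<in> latA ax ay az" using difp_in[OF p] d_def by simp
  have G: "G ax ay az d \<noteq> PI" using assms(5) stab_G[OF assms(4)] d_def by simp
  have nf: "negp ax ay az a \<noteq> a" if "a \<in> {vm ax ay az (1,0,0), vm ax ay az (0,1,0), vm ax ay az (0,0,1)}" for a
    using that assms by (auto simp: vm_def negp_def zmod_minus1)
  obtain a where a: "a \<in> {vm ax ay az (1,0,0), vm ax ay az (0,1,0), vm ax ay az (0,0,1)}"
    and da: "d = a \<or> d = negp ax ay az a"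
  proof -
    have "d = vm ax ay az (1,0,0) \<or> d = negp ax ay az (vm ax ay az (1,0,0)) \<or>
          d = vm ax ay az (0,1,0) \<or> d = negp ax ay az (vm ax ay az (0,1,0)) \<or>
          d = vm ax ay az (0,0,1) \<or> d = negp ax ay az (vm ax ay az (0,0,1))"
      using G unfolding G_def Let_def by (auto split: if_splits)
    thus thesis using that by blast
  qed
  have ain: "a \<in> latA ax ay az" using a vm_in[OF p] by auto
  from da show False
  proof
    assume "d = a" thus False using dd nf[OF a] by simp
  next
    assume h: "d = negp ax ay az a"
    hence "negp ax ay az d = a" using negp_negp[OF ain] by simp
    thus False using dd h nf[OF a] by simp
  qed
qed


theorem lemma2:
  fixes ax ay az :: nat and E :: "pt \<Rightarrow> pauli" and s0 :: pt
  assumes "ax > 1" and "ay > 1" and "az > 1"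
    and "s0 \<in> {(0,1,0), (1,0,0), (0,0,1), (1,1,1)}"
  shows "even (card {s \<in> Cset ax ay az s0.
                      anticommutes (latD ax ay az) E (stab ax ay az s)})"
proof -
  have p: "ax > 0" "ay > 0" "az > 0" using assms by auto
  obtain a b c where s0: "s0 = (a,b,c)" and abc: "0 \<le> a" "a \<le> 1" "0 \<le> b" "b \<le> 1" "0 \<le> c" "c \<le> 1"
    using assms(4) by auto
  note ch = Cset_char[OF p abc]
  define C where "C = Cset ax ay az s0"
  define D where "D = latD ax ay az"
  define P where "P = (\<lambda>s q. pauli_anticomm (E q) (stab ax ay az s q))"
  have finA: "finite (latA ax ay az)"
  proof (rule finite_subset)
    show "latA ax ay az \<subseteq> {0..<2 * int ax} \<times> {0..<2 * int ay} \<times> {0..<2 * int az}"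
      by (auto simp: latA_def)
  qed simp
  have CA: "C \<subseteq> latA ax ay az" using ch unfolding C_def s0 by auto
  have DA: "D \<subseteq> latA ax ay az" unfolding D_def latD_def by auto
  have finC: "finite C" using CA finA finite_subset by blast
  have finD: "finite D" using DA finA finite_subset by blast
  define R where "R = Sigma C (\<lambda>s. {q\<in>D. P s q})"
  have cR: "card R = (\<Sum>s\<in>C. card {q\<in>D. P s q})"
    unfolding R_def using finC finD by (simp add: card_SigmaI)
  have finR: "finite R" unfolding R_def using finC finD by simp
  have eR: "even (card R)"
  proof (rule even_inv[OF finR, of "\<lambda>(s,q). (rf ax ay az q s, q)"], rule ballI)
    fix x assume x: "x \<in> R"
    obtain s q where xq: "x = (s,q)" by (cases x) auto
    have s: "s \<in> C" and q: "q \<in> D" and Psq: "P s q" using x xq unfolding R_def by auto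
    have qA: "q \<in> latA ax ay az" using q DA by auto
    have sA: "s \<in> latA ax ay az" using s CA by auto
    have rC: "rf ax ay az q s \<in> C" using rf_C[OF p abc] s unfolding C_def s0 by blast
    have st: "stab ax ay az (rf ax ay az q s) q = stab ax ay az s q"
      unfolding stab_G[OF qA] difp_rf using G_neg[OF p difp_in[OF p]] by simp
    have Pr: "P (rf ax ay az q s) q" using Psq st unfolding P_def by simp
    have nPI: "stab ax ay az s q \<noteq> PI" using Psq unfolding P_def pauli_anticomm_def by auto
    have nf: "rf ax ay az q s \<noteq> s" using no_fix[OF assms(1-3) qA nPI] .
    show "(\<lambda>(s,q). (rf ax ay az q s, q)) x \<in> R \<and>
          (\<lambda>(s,q). (rf ax ay az q s, q)) ((\<lambda>(s,q). (rf ax ay az q s, q)) x) = x \<and>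
          (\<lambda>(s,q). (rf ax ay az q s, q)) x \<noteq> x"
      using rC q Pr nf rf_rf[OF sA] unfolding xq R_def by simp
  qed
  have "even (card {s\<in>C. odd (card {q\<in>D. P s q})})"
    using eR cR even_sum_card[OF finC, of "\<lambda>s. card {q\<in>D. P s q}"] by simp
  thus ?thesis unfolding C_def D_def P_def anticommutes_def .
qed

end
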